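(* Let $S$ be a submonoid of $\mathbb N^d$. Then $S$ is a PI-monoid if and only if $m(S)\in S\setminus\{0\}$ and $(S\setminus\{0\})-m(S)=\{\mathbf s-m(S):\mathbf s\in S\setminus\{0\}\}$ is a submonoid of $\mathbb N^d$.
   Context: $\preceq_{\mathbb N^d}$ is the componentwise partial order on $\mathbb N^d$; the multiplicity of $S$ is $m(S)=\inf_{\preceq_{\mathbb N^d}}(S\setminus\{0\})$. $S$ is a PI-monoid if there exist a submonoid $T$ of $\mathbb N^d$ and $\mathbf a\in T\setminus\{0\}$ with $S=(\mathbf a+T)\cup\{0\}$. *)

theory Defs
  imports Main "HOL-Library.Function_Algebras"
begin

text \<open>Elements of N^d are modelled as functions 'd \<Rightarrow> nat for a finite index type 'd.
  Addition/zero are pointwise (Function_Algebras); the order \<le> on functions is the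
  pointwise (componentwise) order.\<close>

definition submonoid :: "('d::finite \<Rightarrow> nat) set \<Rightarrow> bool" where
  "submonoid T \<longleftrightarrow> 0 \<in> T \<and> (\<forall>x\<in>T. \<forall>y\<in>T. x + y \<in> T)"

definition is_inf_cw :: "('d::finite \<Rightarrow> nat) set \<Rightarrow> ('d \<Rightarrow> nat) \<Rightarrow> bool" where
  "is_inf_cw A m \<longleftrightarrow> (\<forall>s\<in>A. m \<le> s) \<and> (\<forall>l. (\<forall>s\<in>A. l \<le> s) \<longrightarrow> l \<le> m)"

definition multiplicity_mon :: "('d::finite \<Rightarrow> nat) set \<Rightarrow> ('d \<Rightarrow> nat)" where
  "multiplicity_mon S = (THE m. is_inf_cw (S - {0}) m)"

definition PI_monoid :: "('d::finite \<Rightarrow> nat) set \<Rightarrow> bool" where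
  "PI_monoid S \<longleftrightarrow> (\<exists>T a. submonoid T \<and> a \<in> T \<and> a \<noteq> 0 \<and> S = ((\<lambda>t. a + t) ` T) \<union> {0})"

end

theory Submission
  imports Defs
begin

lemma inf_exists:
  fixes A :: "('d::finite \<Rightarrow> nat) set"
  assumes "A \<noteq> {}"
  shows "is_inf_cw A (\<lambda>i. Inf ((\<lambda>s. s i) ` A))"
  unfolding is_inf_cw_def
proof (intro conjI ballI allI impI)
  fix s assume "s \<in> A"
  then show "(\<lambda>i. Inf ((\<lambda>s. s i) ` A)) \<le> s"
    by (auto simp: le_fun_def intro: cInf_lower)
next
  fix l :: "'d \<Rightarrow> nat" assume h: "\<forall>s\<in>A. l \<le> s"
  show "l \<le> (\<lambda>i. Inf ((\<lambda>s. s i) ` A))"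
    unfolding le_fun_def
  proof
    fix i show "l i \<le> Inf ((\<lambda>s. s i) ` A)"
      using assms h by (auto simp: le_fun_def intro!: cInf_greatest)
  qed
qed

lemma inf_unique:
  assumes "is_inf_cw A m" "is_inf_cw A m'" shows "m = m'"
  using assms unfolding is_inf_cw_def by (meson antisym)

lemma mult_is:
  assumes "is_inf_cw (S - {0}) m" shows "multiplicity_mon S = m"
  unfolding multiplicity_mon_def using assms inf_unique by blast

lemma mult_inf:
  fixes S :: "('d::finite \<Rightarrow> nat) set"
  assumes "S - {0} \<noteq> {}"
  shows "is_inf_cw (S - {0}) (multiplicity_mon S)"
  using inf_exists[OF assms] mult_is by metis

lemma add_diff_fun:
  fixes m s :: "'d \<Rightarrow> nat"
  assumes "m \<le> s" shows "m + (s - m) = s"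
  using assms by (auto simp: le_fun_def fun_diff_def plus_fun_def)

lemma add_diff_fun2:
  fixes m s :: "'d \<Rightarrow> nat"
  shows "(m + s) - m = s"
  by (auto simp: fun_diff_def plus_fun_def)

theorem proposition5p5:
  fixes S :: "('d::finite \<Rightarrow> nat) set"
  assumes "submonoid S"
  shows "PI_monoid S \<longleftrightarrow>
    (multiplicity_mon S \<in> S - {0} \<and>
     submonoid ((\<lambda>s. s - multiplicity_mon S) ` (S - {0})))"
proof
  assume "PI_monoid S"
  then obtain T a where T: "submonoid T" "a \<in> T" "a \<noteq> 0" "S = ((\<lambda>t. a + t) ` T) \<union> {0}"
    unfolding PI_monoid_def by blast
  have nz: "a + t \<noteq> 0" for t :: "'d \<Rightarrow> nat"
  proof
    assume "a + t = 0"
    then have "a = 0" by (auto simp: plus_fun_def fun_eq_iff)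
    with T(3) show False by simp
  qed
  have S0: "S - {0} = (\<lambda>t. a + t) ` T" using T(4) nz by auto
  have a0: "a + 0 = a" by simp
  have "is_inf_cw (S - {0}) a"
    unfolding is_inf_cw_def S0
  proof (intro conjI ballI allI impI)
    fix s assume "s \<in> (\<lambda>t. a + t) ` T"
    then show "a \<le> s" by (auto simp: le_fun_def plus_fun_def)
  next
    fix l :: "'d \<Rightarrow> nat" assume "\<forall>s\<in>(\<lambda>t. a + t) ` T. l \<le> s"
    moreover have "a + 0 \<in> (\<lambda>t. a + t) ` T" using T(1) unfolding submonoid_def by blast
    ultimately show "l \<le> a" by (metis add.right_neutral)
  qed
  then have m: "multiplicity_mon S = a" by (rule mult_is)
  have img: "(\<lambda>s. s - a) ` (S - {0}) = T"
    unfolding S0 image_image add_diff_fun2 by simp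
  show "multiplicity_mon S \<in> S - {0} \<and>
     submonoid ((\<lambda>s. s - multiplicity_mon S) ` (S - {0}))"
  proof -
    have "a + 0 \<in> (\<lambda>t. a + t) ` T" using T(1) unfolding submonoid_def by blast
    then have "a \<in> S - {0}" using S0 by simp
    then show ?thesis unfolding m img using T(1) by simp
  qed
next
  assume h: "multiplicity_mon S \<in> S - {0} \<and>
     submonoid ((\<lambda>s. s - multiplicity_mon S) ` (S - {0}))"
  define m where "m = multiplicity_mon S"
  define T where "T = (\<lambda>s. s - m) ` (S - {0})"
  have mS: "m \<in> S" "m \<noteq> 0" and sT: "submonoid T" using h by (auto simp: m_def T_def)
  have inf: "is_inf_cw (S - {0}) m" unfolding m_def using mult_inf h by blast
  have le: "m \<le> s" if "s \<in> S - {0}" for s using inf that unfolding is_inf_cw_def by blast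
  have mm: "m + m \<in> S" using assms mS unfolding submonoid_def by blast
  have mmnz: "m + m \<noteq> 0"
  proof
    assume "m + m = 0"
    then have "m = 0" by (auto simp: plus_fun_def fun_eq_iff)
    with mS show False by simp
  qed
  have mT: "m \<in> T" unfolding T_def using mm mmnz add_diff_fun2[of m m]
    by (metis DiffI empty_iff image_eqI insert_iff)
  have "S = ((\<lambda>t. m + t) ` T) \<union> {0}"
  proof
    show "S \<subseteq> ((\<lambda>t. m + t) ` T) \<union> {0}"
    proof
      fix s assume s: "s \<in> S"
      show "s \<in> ((\<lambda>t. m + t) ` T) \<union> {0}"
      proof (cases "s = 0")
        case False
        then have "s = m + (s - m)" using le s add_diff_fun by (metis DiffI empty_iff insert_iff)
        moreover have "s - m \<in> T" using s False unfolding T_def by blast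
        ultimately show ?thesis by blast
      qed simp
    qed
  next
    show "((\<lambda>t. m + t) ` T) \<union> {0} \<subseteq> S"
    proof
      fix x assume "x \<in> ((\<lambda>t. m + t) ` T) \<union> {0}"
      then consider "x = 0" | s where "s \<in> S - {0}" "x = m + (s - m)"
        unfolding T_def by blast
      then show "x \<in> S"
      proof cases
        case 1 then show ?thesis using assms unfolding submonoid_def by simp
      next
        case 2 then show ?thesis using le[OF 2(1)] add_diff_fun by (metis DiffD1)
      qed
    qed
  qed
  then show "PI_monoid S" unfolding PI_monoid_def using sT mT mS by blast
qed

end
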